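(* Let $F:\mathbb{R}^n\rightrightarrows\mathbb{R}^p$ and $G:\mathbb{R}^n\rightrightarrows\mathbb{R}^q$ be nearly convex set-valued mappings and $\Theta\subset\mathbb{R}^n$ a nearly convex set such that $\operatorname{ri}(\operatorname{dom} F)\cap\operatorname{ri}(\operatorname{dom} G)\cap\operatorname{ri}\Theta\neq\emptyset$. Then the set-valued mapping $\Psi:\mathbb{R}^n\times\mathbb{R}^n\times\mathbb{R}^q\rightrightarrows\mathbb{R}^p$ defined by $\Psi(x,u,y)=F(x+u)$ if $x\in\Theta$ and $y\in G(x)$, and $\Psi(x,u,y)=\emptyset$ otherwise, is nearly convex.
   Context: A set $\Omega\subset\mathbb{R}^k$ is nearly convex if there is a convex set $C$ with $C\subset\Omega\subset\overline{C}$. For an arbitrary set $\Omega$, $\operatorname{ri}\Omega=\{a\in\Omega:\exists\delta>0,\ B(a;\delta)\cap\operatorname{aff}\Omega\subset\Omega\}$. For a set-valued mapping $F$: $\operatorname{dom} F=\{x:F(x)\neq\emptyset\}$, $\operatorname{gph} F=\{(x,y):y\in F(x)\}$; $F$ is nearly convex if $\operatorname{gph} F$ is nearly convex. *)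

theory Defs
  imports "HOL-Analysis.Analysis"
begin

text \<open>Set-valued mappings \<open>F : X \<rightrightarrows> Y\<close> are modelled as functions \<open>X \<Rightarrow> Y set\<close>.\<close>

definition nearly_convex :: "'a::euclidean_space set \<Rightarrow> bool" where
  "nearly_convex \<Omega> \<longleftrightarrow> (\<exists>C. convex C \<and> C \<subseteq> \<Omega> \<and> \<Omega> \<subseteq> closure C)"

definition ri :: "'a::euclidean_space set \<Rightarrow> 'a set" where
  "ri \<Omega> = {a \<in> \<Omega>. \<exists>\<delta>>0. ball a \<delta> \<inter> affine hull \<Omega> \<subseteq> \<Omega>}"

definition sv_dom :: "('a \<Rightarrow> 'b set) \<Rightarrow> 'a set" where
  "sv_dom F = {x. F x \<noteq> {}}"

definition gph :: "('a \<Rightarrow> 'b set) \<Rightarrow> ('a \<times> 'b) set" where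
  "gph F = {(x, y). y \<in> F x}"

definition nearly_convex_map :: "('a::euclidean_space \<Rightarrow> 'b::euclidean_space set) \<Rightarrow> bool" where
  "nearly_convex_map F \<longleftrightarrow> nearly_convex (gph F)"

end

theory Submission
  imports Defs
begin

lemma ri_eq_rel_interior: "ri S = rel_interior S"
  unfolding ri_def using mem_rel_interior_ball by blast

lemma ri_nc:
  fixes C :: "'a::euclidean_space set"
  assumes "convex C" "C \<subseteq> \<Omega>" "\<Omega> \<subseteq> closure C"
  shows "ri \<Omega> = rel_interior C"
proof -
  have h1: "affine hull C \<subseteq> affine hull \<Omega>" using assms by (simp add: hull_mono)
  have "affine hull \<Omega> \<subseteq> affine hull (closure C)" by (rule hull_mono) (rule assms(3))
  hence ah: "affine hull \<Omega> = affine hull C" using h1 closure_same_affine_hull[of C] by blast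
  have "affine hull \<Omega> = affine hull (closure C)" using ah by simp
  have a: "rel_interior C \<subseteq> rel_interior \<Omega>"
    using subset_rel_interior[OF assms(2) ah[symmetric]] .
  have "rel_interior \<Omega> \<subseteq> rel_interior (closure C)"
    using subset_rel_interior[OF assms(3)] ah by simp
  hence "rel_interior \<Omega> \<subseteq> rel_interior C" using convex_rel_interior_closure[OF assms(1)] by simp
  with a show ?thesis by (simp add: ri_eq_rel_interior)
qed

theorem theorem4p5:
  fixes F :: "'n::euclidean_space \<Rightarrow> 'p::euclidean_space set"
    and G :: "'n \<Rightarrow> 'q::euclidean_space set"
    and \<Theta> :: "'n set"
    and \<Psi> :: "'n \<times> 'n \<times> 'q \<Rightarrow> 'p set"
  assumes "nearly_convex_map F" and "nearly_convex_map G" and "nearly_convex \<Theta>"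
    and "ri (sv_dom F) \<inter> ri (sv_dom G) \<inter> ri \<Theta> \<noteq> {}"
    and "\<And>x u y. \<Psi> (x, u, y) = (if x \<in> \<Theta> \<and> y \<in> G x then F (x + u) else {})"
  shows "nearly_convex_map \<Psi>"
proof (cases "gph \<Psi> = {}")
  case True
  then show ?thesis unfolding nearly_convex_map_def nearly_convex_def by auto
next
  case False
  then obtain x u y z where P: "((x,u,y),z) \<in> gph \<Psi>" by (auto simp: gph_def)
  have Pm: "x \<in> \<Theta>" "y \<in> G x" "z \<in> F (x+u)" using P assms(5) by (auto simp: gph_def split: if_splits)
  obtain CF where CF: "convex CF" "CF \<subseteq> gph F" "gph F \<subseteq> closure CF"
    using assms(1) unfolding nearly_convex_map_def nearly_convex_def by blast
  obtain CG where CG: "convex CG" "CG \<subseteq> gph G" "gph G \<subseteq> closure CG"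
    using assms(2) unfolding nearly_convex_map_def nearly_convex_def by blast
  obtain CT where CT: "convex CT" "CT \<subseteq> \<Theta>" "\<Theta> \<subseteq> closure CT"
    using assms(3) unfolding nearly_convex_def by blast
  have "(x+u, z) \<in> gph F" using Pm by (simp add: gph_def)
  hence "CF \<noteq> {}" using CF(3) by auto
  then obtain a z0 where az0: "(a,z0) \<in> rel_interior CF"
    using rel_interior_eq_empty[OF CF(1)] by auto
  have lf: "linear (fst :: 'n \<times> 'q \<Rightarrow> 'n)" by (rule linear_fst)
  have sdG: "sv_dom G = fst ` gph G" by (auto simp: sv_dom_def gph_def image_def)
  have "fst ` CG \<subseteq> sv_dom G" using CG(2) sdG by auto
  moreover have "sv_dom G \<subseteq> closure (fst ` CG)"
  proof -
    have "fst ` closure CG \<subseteq> closure (fst ` CG)"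
      by (rule image_closure_subset[OF linear_continuous_on[OF bounded_linear_fst] closed_closure closure_subset])
    thus ?thesis using CG(3) sdG by auto
  qed
  ultimately have "ri (sv_dom G) = rel_interior (fst ` CG)"
    using ri_nc[of "fst ` CG"] convex_linear_image[OF lf CG(1)] by blast
  also have "\<dots> = fst ` rel_interior CG"
    using rel_interior_convex_linear_image[OF lf CG(1)] by simp
  finally have riG: "ri (sv_dom G) = fst ` rel_interior CG" .
  have riT: "ri \<Theta> = rel_interior CT" using ri_nc CT by blast
  obtain x0 where "x0 \<in> ri (sv_dom G)" "x0 \<in> ri \<Theta>" using assms(4) by blast
  then obtain y0 where x0: "x0 \<in> rel_interior CT" "(x0,y0) \<in> rel_interior CG"
    using riG riT by force
  define u0 where "u0 = a - x0"
  define D where "D = {((x',u',y'),z'). x' \<in> rel_interior CT \<and> (x',y') \<in> rel_interior CG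
                         \<and> (x'+u',z') \<in> rel_interior CF}"
  have Q: "((x0,u0,y0),z0) \<in> D" using x0 az0 by (simp add: D_def u0_def)
  have D_eq: "D = {w. fst (fst w) \<in> rel_interior CT} \<inter>
     {w. (fst (fst w), snd (snd (fst w))) \<in> rel_interior CG} \<inter>
     {w. (fst (fst w) + fst (snd (fst w)), snd w) \<in> rel_interior CF}"
    unfolding D_def by auto
  have l1: "linear (\<lambda>w::('n \<times> 'n \<times> 'q) \<times> 'p. fst (fst w))" by (auto simp: linear_iff)
  have l2: "linear (\<lambda>w::('n \<times> 'n \<times> 'q) \<times> 'p. (fst (fst w), snd (snd (fst w))))" by (auto simp: linear_iff)
  have l3: "linear (\<lambda>w::('n \<times> 'n \<times> 'q) \<times> 'p. (fst (fst w) + fst (snd (fst w)), snd w))"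
    by (auto simp: linear_iff algebra_simps)
  have "convex D" unfolding D_eq
    apply (intro convex_Int)
    using convex_linear_vimage[OF l1 convex_rel_interior[OF CT(1)]]
      convex_linear_vimage[OF l2 convex_rel_interior[OF CG(1)]]
      convex_linear_vimage[OF l3 convex_rel_interior[OF CF(1)]]
    by (auto simp: vimage_def)
  moreover have "D \<subseteq> gph \<Psi>"
  proof
    fix w assume "w \<in> D"
    then obtain x' u' y' z' where w: "w = ((x',u',y'),z')" "x' \<in> rel_interior CT"
      "(x',y') \<in> rel_interior CG" "(x'+u',z') \<in> rel_interior CF"
      unfolding D_def by auto
    hence "x' \<in> \<Theta>" "(x',y') \<in> gph G" "(x'+u',z') \<in> gph F"
      using CT(2) CG(2) CF(2) w(2,3,4) rel_interior_subset[of CT] rel_interior_subset[of CG]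
        rel_interior_subset[of CF] by (meson subsetD)+
    thus "w \<in> gph \<Psi>" using w(1) assms(5) by (simp add: gph_def)
  qed
  moreover have "gph \<Psi> \<subseteq> closure D"
  proof
    fix w assume "w \<in> gph \<Psi>"
    then obtain x u y z where w: "w = ((x,u,y),z)" and Pm: "x \<in> \<Theta>" "y \<in> G x" "z \<in> F (x+u)"
      using assms(5) by (auto simp: gph_def split: if_splits)
    have cx: "x \<in> closure CT" "(x,y) \<in> closure CG" "(x+u,z) \<in> closure CF"
      using Pm CT CG CF by (auto simp: gph_def)
    define Q where "Q = ((x0,u0,y0),z0)"
    show "w \<in> closure D" unfolding closure_approachable
    proof (intro allI impI)
      fix \<epsilon> :: real assume \<epsilon>: "\<epsilon> > 0"
      define n where "n = norm (w - Q)"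
      define e where "e = min 1 (\<epsilon> / (n + 1))"
      have n0: "n \<ge> 0" unfolding n_def by simp
      have e0: "e > 0" "e \<le> 1" using \<epsilon> n0 by (auto simp: e_def)
      have "e * n \<le> \<epsilon> / (n+1) * n" using n0 by (intro mult_right_mono) (auto simp: e_def)
      also have "\<dots> < \<epsilon>" using n0 \<epsilon> by (simp add: field_simps)
      finally have en: "e * n < \<epsilon>" .
      define W where "W = w - e *\<^sub>R (w - Q)"
      have s1: "x - e *\<^sub>R (x - x0) \<in> rel_interior CT"
        using rel_interior_closure_convex_shrink[OF CT(1) x0(1) cx(1) e0] .
      have s2: "(x,y) - e *\<^sub>R ((x,y) - (x0,y0)) \<in> rel_interior CG"
        using rel_interior_closure_convex_shrink[OF CG(1) x0(2) cx(2) e0] .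
      have s3: "(x+u,z) - e *\<^sub>R ((x+u,z) - (a,z0)) \<in> rel_interior CF"
        using rel_interior_closure_convex_shrink[OF CF(1) az0 cx(3) e0] .
      have eq3: "(x+u,z) - e *\<^sub>R ((x+u,z) - (a,z0)) =
          ((x - e *\<^sub>R (x - x0)) + (u - e *\<^sub>R (u - u0)), z - e *\<^sub>R (z - z0))"
        by (simp add: u0_def algebra_simps)
      have "W \<in> D" using s1 s2 s3 unfolding eq3
        by (simp add: W_def w Q_def D_def)
      moreover have "dist W w < \<epsilon>"
        using en e0 by (simp add: W_def dist_norm n_def)
      ultimately show "\<exists>y\<in>D. dist y w < \<epsilon>" by blast
    qed
  qed
  ultimately show ?thesis unfolding nearly_convex_map_def nearly_convex_def by blast
qed

end
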